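(* Let $i,n$ be natural numbers and let $(A,+,\circ)$ be a brace of cardinality $p^n$, where $p$ is a prime with $p>n+1$. Then $p^iA=\{p^ia: a\in A\}$ is an ideal of $A$. Moreover $A^{\circ p^i}=p^iA$, where $A^{\circ p^i}$ is the subgroup of $(A,\circ)$ generated by the elements $a^{\circ p^i}=a\circ a\circ\cdots\circ a$ ($p^i$ factors), $a\in A$.
   Context: A (left) brace is a set $A$ with binary operations $+,\circ$ such that $(A,+)$ is an abelian group, $(A,\circ)$ is a group, and $a\circ(b+c)+a=a\circ b+a\circ c$ for all $a,b,c$. Write $a*b=a\circ b-a-b$. An ideal of a brace $A$ is a subgroup $I$ of $(A,+)$ which is a normal subgroup of $(A,\circ)$ and satisfies $a*x\in I$ for all $a\in A$, $x\in I$; equivalently, an additive subgroup $I$ with $A*I\subseteq I$ and $I*A\subseteq I$. $p^ia$ denotes the $p^i$-fold additive multiple of $a$. *)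

theory Defs
  imports "HOL-Algebra.Algebra"
begin

text \<open>A (left) brace: additive structure S (abelian group) and multiplicative
  structure T (group, operation circ) on the same carrier, with the brace law
  a circ (b + c) + a = a circ b + a circ c.\<close>
definition brace :: "'a monoid \<Rightarrow> 'a monoid \<Rightarrow> bool" where
  "brace S T \<longleftrightarrow> comm_group S \<and> group T \<and> carrier T = carrier S \<and>
     (\<forall>a\<in>carrier S. \<forall>b\<in>carrier S. \<forall>c\<in>carrier S.
        (a \<otimes>\<^bsub>T\<^esub> (b \<otimes>\<^bsub>S\<^esub> c)) \<otimes>\<^bsub>S\<^esub> a
          = (a \<otimes>\<^bsub>T\<^esub> b) \<otimes>\<^bsub>S\<^esub> (a \<otimes>\<^bsub>T\<^esub> c))"

definition brace_star :: "'a monoid \<Rightarrow> 'a monoid \<Rightarrow> 'a \<Rightarrow> 'a \<Rightarrow> 'a" where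
  "brace_star S T a b = ((a \<otimes>\<^bsub>T\<^esub> b) \<otimes>\<^bsub>S\<^esub> inv\<^bsub>S\<^esub> a) \<otimes>\<^bsub>S\<^esub> inv\<^bsub>S\<^esub> b"

definition brace_ideal :: "'a monoid \<Rightarrow> 'a monoid \<Rightarrow> 'a set \<Rightarrow> bool" where
  "brace_ideal S T I \<longleftrightarrow> subgroup I S \<and> I \<lhd> T \<and>
     (\<forall>a\<in>carrier S. \<forall>x\<in>I. brace_star S T a x \<in> I)"

end

theory Submission
  imports Defs
begin


lemma (in group_action) pgroup_fixed:
  assumes finE: "finite E" and p: "Factorial_Ring.prime (p::nat)" and ord: "order G = p ^ n"
    and pE: "p dvd card E" and x0: "x0 \<in> E" and fx0: "\<forall>g\<in>carrier G. \<phi> g x0 = x0"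
  shows "\<exists>x\<in>E. x \<noteq> x0 \<and> (\<forall>g\<in>carrier G. \<phi> g x = x)"
proof (rule ccontr)
  assume nf: "\<not> ?thesis"
  have o0: "orbit G \<phi> x0 = {x0}"
    using fx0 orbit_refl[OF x0] unfolding orbit_def by auto
  have O0: "{x0} \<in> orbits G E \<phi>" using o0 x0 unfolding orbits_def by blast
  have finO: "finite (orbits G E \<phi>)"
  proof -
    have "orbits G E \<phi> \<subseteq> Pow E" using orbits_coverture by blast
    then show ?thesis using finE finite_subset by blast
  qed
  have dv: "p dvd card Q" if Q: "Q \<in> orbits G E \<phi> - {{x0}}" for Q
  proof -
    obtain x where x: "x \<in> E" "Q = orbit G \<phi> x" using Q unfolding orbits_def by blast
    have "card Q dvd p ^ n" using orbit_stabilizer_theorem[OF x(1)] ord x(2)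
      by (metis dvd_triv_left)
    then obtain k where k: "k \<le> n" "card Q = p ^ k" using divides_primepow_nat[OF p] by blast
    show ?thesis
    proof (cases k)
      case 0
      then have "card Q = 1" using k by simp
      moreover have "x \<in> Q" using orbit_refl[OF x(1)] x(2) by simp
      ultimately have Ox: "Q = {x}" by (metis card_1_singletonE singletonD)
      have "\<forall>g\<in>carrier G. \<phi> g x = x"
      proof
        fix g assume "g \<in> carrier G"
        then have "\<phi> g x \<in> Q" using x(2) unfolding orbit_def by blast
        then show "\<phi> g x = x" using Ox by simp
      qed
      then have "x = x0" using nf x(1) by blast
      then show ?thesis using Q Ox by simp
    next
      case (Suc k') then show ?thesis using k by simp
    qed
  qed
  have "card E = (\<Sum>Q\<in>orbits G E \<phi>. card Q)"
    using disjoint_sum[OF finE, of "\<lambda>_. 1::nat"] by simp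
  also have "\<dots> = card {x0} + (\<Sum>Q\<in>orbits G E \<phi> - {{x0}}. card Q)"
    using sum.remove[OF finO O0, of card] by simp
  finally have "card E = 1 + (\<Sum>Q\<in>orbits G E \<phi> - {{x0}}. card Q)" by simp
  moreover have "p dvd (\<Sum>Q\<in>orbits G E \<phi> - {{x0}}. card Q)"
    using dv by (intro dvd_sum) auto
  ultimately have "p dvd 1" using pE by (metis dvd_add_left_iff)
  then show False using p by simp
qed




locale brc =
  S: comm_group S + T: group T for S :: "'a monoid" and T :: "'a monoid" +
  assumes carr: "carrier T = carrier S"
  and law: "\<And>a b c. a \<in> carrier S \<Longrightarrow> b \<in> carrier S \<Longrightarrow> c \<in> carrier S \<Longrightarrow>
        (a \<otimes>\<^bsub>T\<^esub> (b \<otimes>\<^bsub>S\<^esub> c)) \<otimes>\<^bsub>S\<^esub> a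
          = (a \<otimes>\<^bsub>T\<^esub> b) \<otimes>\<^bsub>S\<^esub> (a \<otimes>\<^bsub>T\<^esub> c)"
begin

abbreviation A where "A \<equiv> carrier S"

lemma Tm_closed[simp]: "a \<in> A \<Longrightarrow> b \<in> A \<Longrightarrow> a \<otimes>\<^bsub>T\<^esub> b \<in> A"
  using T.m_closed carr by auto
lemma Tinv_closed[simp]: "a \<in> A \<Longrightarrow> inv\<^bsub>T\<^esub> a \<in> A"
  using T.inv_closed carr by auto
lemma Tpow_closed[simp]: "a \<in> A \<Longrightarrow> a [^]\<^bsub>T\<^esub> (m::nat) \<in> A"
  using T.nat_pow_closed carr by auto

lemma S_cancel1[simp]: "x \<in> A \<Longrightarrow> y \<in> A \<Longrightarrow> x \<otimes>\<^bsub>S\<^esub> (inv\<^bsub>S\<^esub> x \<otimes>\<^bsub>S\<^esub> y) = y"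
  by (simp add: S.m_assoc[symmetric])
lemma S_cancel2[simp]: "x \<in> A \<Longrightarrow> y \<in> A \<Longrightarrow> inv\<^bsub>S\<^esub> x \<otimes>\<^bsub>S\<^esub> (x \<otimes>\<^bsub>S\<^esub> y) = y"
  by (simp add: S.m_assoc[symmetric])

lemma one_eq: "\<one>\<^bsub>T\<^esub> = \<one>\<^bsub>S\<^esub>"
proof -
  have r: "a \<otimes>\<^bsub>T\<^esub> \<one>\<^bsub>S\<^esub> = a" if a: "a \<in> A" for a
  proof -
    have c: "a \<otimes>\<^bsub>T\<^esub> \<one>\<^bsub>S\<^esub> \<in> A" using a by simp
    have "(a \<otimes>\<^bsub>T\<^esub> \<one>\<^bsub>S\<^esub>) \<otimes>\<^bsub>S\<^esub> a = (a \<otimes>\<^bsub>T\<^esub> \<one>\<^bsub>S\<^esub>) \<otimes>\<^bsub>S\<^esub> (a \<otimes>\<^bsub>T\<^esub> \<one>\<^bsub>S\<^esub>)"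
      using law[OF a S.one_closed S.one_closed] by simp
    then show ?thesis using c a by (metis S.l_cancel)
  qed
  have "\<one>\<^bsub>T\<^esub> \<in> A" using carr by force
  then show ?thesis using r[of "\<one>\<^bsub>T\<^esub>"] carr by simp
qed

definition lam where "lam a x = (a \<otimes>\<^bsub>T\<^esub> x) \<otimes>\<^bsub>S\<^esub> inv\<^bsub>S\<^esub> a"

lemma lam_closed[simp]: "a \<in> A \<Longrightarrow> x \<in> A \<Longrightarrow> lam a x \<in> A"
  by (simp add: lam_def)

lemma circ_eq: "a \<in> A \<Longrightarrow> x \<in> A \<Longrightarrow> a \<otimes>\<^bsub>T\<^esub> x = a \<otimes>\<^bsub>S\<^esub> lam a x"
  by (simp add: lam_def S.m_ac)

lemma lam_add: "a \<in> A \<Longrightarrow> x \<in> A \<Longrightarrow> y \<in> A \<Longrightarrow> lam a (x \<otimes>\<^bsub>S\<^esub> y) = lam a x \<otimes>\<^bsub>S\<^esub> lam a y"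
proof -
  assume h: "a \<in> A" "x \<in> A" "y \<in> A"
  have e: "(a \<otimes>\<^bsub>T\<^esub> (x \<otimes>\<^bsub>S\<^esub> y)) = (a \<otimes>\<^bsub>T\<^esub> x) \<otimes>\<^bsub>S\<^esub> (a \<otimes>\<^bsub>T\<^esub> y) \<otimes>\<^bsub>S\<^esub> inv\<^bsub>S\<^esub> a"
    using law[OF h] h by (metis S.inv_solve_right S.m_closed S.inv_closed Tm_closed)
  show ?thesis unfolding lam_def e using h by (simp add: S.m_ac)
qed

lemma lam_one: "x \<in> A \<Longrightarrow> lam \<one>\<^bsub>S\<^esub> x = x"
  unfolding lam_def using carr by (metis S.inv_one S.one_closed S.r_one T.l_one one_eq)

lemma lam_hom: "a \<in> A \<Longrightarrow> group_hom S S (lam a)"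
  unfolding group_hom_def group_hom_axioms_def hom_def
  using lam_add S.is_group by auto

lemma lam_inv: "a \<in> A \<Longrightarrow> x \<in> A \<Longrightarrow> lam a (inv\<^bsub>S\<^esub> x) = inv\<^bsub>S\<^esub> (lam a x)"
  using group_hom.hom_inv[OF lam_hom] by blast

lemma lam_pow: "a \<in> A \<Longrightarrow> x \<in> A \<Longrightarrow> lam a (x [^]\<^bsub>S\<^esub> (m::nat)) = lam a x [^]\<^bsub>S\<^esub> m"
  using group_hom.hom_nat_pow[OF lam_hom] by blast

lemma lam_comp: "a \<in> A \<Longrightarrow> b \<in> A \<Longrightarrow> x \<in> A \<Longrightarrow> lam a (lam b x) = lam (a \<otimes>\<^bsub>T\<^esub> b) x"
proof -
  assume h: "a \<in> A" "b \<in> A" "x \<in> A"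
  have "lam a (lam b x) = lam a (b \<otimes>\<^bsub>T\<^esub> x) \<otimes>\<^bsub>S\<^esub> inv\<^bsub>S\<^esub> (lam a b)"
    unfolding lam_def[of b] using h by (simp add: lam_add lam_inv)
  also have "\<dots> = lam (a \<otimes>\<^bsub>T\<^esub> b) x"
    using h carr by (simp add: lam_def T.m_assoc S.inv_mult_group S.m_ac)
  finally show ?thesis .
qed

lemma lam_inv_left: "a \<in> A \<Longrightarrow> x \<in> A \<Longrightarrow> lam (inv\<^bsub>T\<^esub> a) (lam a x) = x"
  using carr by (simp add: lam_comp lam_one one_eq)
lemma lam_inv_right: "a \<in> A \<Longrightarrow> x \<in> A \<Longrightarrow> lam a (lam (inv\<^bsub>T\<^esub> a) x) = x"
  using carr by (simp add: lam_comp lam_one one_eq)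

definition D where "D a x = lam a x \<otimes>\<^bsub>S\<^esub> inv\<^bsub>S\<^esub> x"

lemma D_closed[simp]: "a \<in> A \<Longrightarrow> x \<in> A \<Longrightarrow> D a x \<in> A"
  by (simp add: D_def)

lemma star_eq: "brace_star S T a x = D a x"
  by (simp add: brace_star_def D_def lam_def)

lemma D_add: "a \<in> A \<Longrightarrow> x \<in> A \<Longrightarrow> y \<in> A \<Longrightarrow> D a (x \<otimes>\<^bsub>S\<^esub> y) = D a x \<otimes>\<^bsub>S\<^esub> D a y"
  by (simp add: D_def lam_add S.inv_mult S.m_ac)

lemma D_hom: "a \<in> A \<Longrightarrow> group_hom S S (D a)"
  unfolding group_hom_def group_hom_axioms_def hom_def
  using D_add S.is_group by auto

lemma D_one[simp]: "a \<in> A \<Longrightarrow> D a \<one>\<^bsub>S\<^esub> = \<one>\<^bsub>S\<^esub>"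
  using group_hom.hom_one[OF D_hom] by blast

lemma D_inv: "a \<in> A \<Longrightarrow> x \<in> A \<Longrightarrow> D a (inv\<^bsub>S\<^esub> x) = inv\<^bsub>S\<^esub> (D a x)"
  using group_hom.hom_inv[OF D_hom] by blast

lemma D_pow: "a \<in> A \<Longrightarrow> x \<in> A \<Longrightarrow> D a (x [^]\<^bsub>S\<^esub> (m::nat)) = D a x [^]\<^bsub>S\<^esub> m"
  using group_hom.hom_nat_pow[OF D_hom] by blast

lemma lam_D: "a \<in> A \<Longrightarrow> x \<in> A \<Longrightarrow> lam a x = x \<otimes>\<^bsub>S\<^esub> D a x"
  by (simp add: D_def S.m_ac)

lemma D_lam: "a \<in> A \<Longrightarrow> b \<in> A \<Longrightarrow> x \<in> A \<Longrightarrow>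
   D a (lam b x) = lam b (D (inv\<^bsub>T\<^esub> b \<otimes>\<^bsub>T\<^esub> a \<otimes>\<^bsub>T\<^esub> b) x)"
proof -
  assume h: "a \<in> A" "b \<in> A" "x \<in> A"
  have "b \<otimes>\<^bsub>T\<^esub> (inv\<^bsub>T\<^esub> b \<otimes>\<^bsub>T\<^esub> a \<otimes>\<^bsub>T\<^esub> b) = a \<otimes>\<^bsub>T\<^esub> b"
    using h carr by (simp add: T.m_assoc[symmetric])
  then show ?thesis using h by (simp add: D_def lam_add lam_inv lam_comp)
qed


fun F :: "nat \<Rightarrow> 'a set" where
  "F 0 = {\<one>\<^bsub>S\<^esub>}"
| "F (Suc j) = {x \<in> A. \<forall>a\<in>A. D a x \<in> F j}"

lemma F_sub: "subgroup (F j) S"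
proof (induction j)
  case 0 then show ?case using S.triv_subgroup by simp
next
  case (Suc j)
  interpret H: subgroup "F j" S by (rule Suc)
  show ?case
  proof (rule S.subgroupI)
    show "F (Suc j) \<subseteq> A" by auto
    show "F (Suc j) \<noteq> {}" using S.one_closed by auto
    show "inv\<^bsub>S\<^esub> x \<in> F (Suc j)" if "x \<in> F (Suc j)" for x
      using that by (auto simp: D_inv)
    show "x \<otimes>\<^bsub>S\<^esub> y \<in> F (Suc j)" if "x \<in> F (Suc j)" "y \<in> F (Suc j)" for x y
      using that by (auto simp: D_add)
  qed
qed

lemma F_carr: "x \<in> F j \<Longrightarrow> x \<in> A"
  using subgroup.mem_carrier[OF F_sub] by blast

lemma F_lam: "x \<in> F j \<Longrightarrow> b \<in> A \<Longrightarrow> lam b x \<in> F j"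
proof (induction j arbitrary: x b)
  case 0 then show ?case using group_hom.hom_one[OF lam_hom] by auto
next
  case (Suc j)
  have "D a (lam b x) \<in> F j" if a: "a \<in> A" for a
    using Suc a by (simp add: D_lam)
  then show ?case using Suc by auto
qed

lemma F_mono_Suc: "F j \<subseteq> F (Suc j)"
proof (induction j)
  case 0 then show ?case by auto
next
  case (Suc j) then show ?case by auto
qed

lemma F_mono: "j \<le> k \<Longrightarrow> F j \<subseteq> F k"
  using lift_Suc_mono_le[of F, OF F_mono_Suc] by blast

lemma F_D: "x \<in> F (Suc j) \<Longrightarrow> a \<in> A \<Longrightarrow> D a x \<in> F j"
  by auto

lemma F_lam_image: assumes b: "b \<in> A" shows "lam b ` F j = F j"
proof
  show "lam b ` F j \<subseteq> F j" using F_lam b by auto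
  show "F j \<subseteq> lam b ` F j"
  proof
    fix x assume x: "x \<in> F j"
    then have "lam b (lam (inv\<^bsub>T\<^esub> b) x) = x" using b F_carr lam_inv_right by blast
    moreover have "lam (inv\<^bsub>T\<^esub> b) x \<in> F j" using F_lam x b by simp
    ultimately show "x \<in> lam b ` F j" by force
  qed
qed


lemma lam_coset: assumes g: "g \<in> A" and x: "x \<in> A"
  shows "lam g ` (F j #>\<^bsub>S\<^esub> x) = F j #>\<^bsub>S\<^esub> lam g x"
proof -
  have "lam g ` (F j #>\<^bsub>S\<^esub> x) = (lam g ` F j) #>\<^bsub>S\<^esub> lam g x"
  proof
    show "lam g ` (F j #>\<^bsub>S\<^esub> x) \<subseteq> (lam g ` F j) #>\<^bsub>S\<^esub> lam g x"
      unfolding r_coset_def using g x F_carr by (auto simp: lam_add)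
    show "(lam g ` F j) #>\<^bsub>S\<^esub> lam g x \<subseteq> lam g ` (F j #>\<^bsub>S\<^esub> x)"
    proof
      fix y assume "y \<in> (lam g ` F j) #>\<^bsub>S\<^esub> lam g x"
      then obtain h where h: "h \<in> F j" "y = lam g h \<otimes>\<^bsub>S\<^esub> lam g x"
        unfolding r_coset_def by auto
      then have "y = lam g (h \<otimes>\<^bsub>S\<^esub> x)" using g x F_carr by (simp add: lam_add)
      moreover have "h \<otimes>\<^bsub>S\<^esub> x \<in> F j #>\<^bsub>S\<^esub> x" using h unfolding r_coset_def by auto
      ultimately show "y \<in> lam g ` (F j #>\<^bsub>S\<^esub> x)" by blast
    qed
  qed
  then show ?thesis using F_lam_image[OF g] by simp
qed

lemma F_growth:
  assumes fin: "finite A" and p: "Factorial_Ring.prime (p::nat)" and cA: "card A = p ^ n"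
    and ne: "F j \<noteq> A"
  shows "\<exists>x \<in> F (Suc j). x \<notin> F j"
proof -
  define H where "H = F j"
  define E where "E = rcosets\<^bsub>S\<^esub> H"
  define \<phi> where "\<phi> g = (\<lambda>C \<in> E. lam g ` C)" for g
  interpret H: subgroup H S unfolding H_def by (rule F_sub)
  have HA: "H \<subseteq> A" by (rule H.subset)
  have Eform: "C \<in> E \<longleftrightarrow> (\<exists>x\<in>A. C = H #>\<^bsub>S\<^esub> x)" for C
    unfolding E_def RCOSETS_def by blast
  have Eform1: "\<exists>x\<in>A. C = H #>\<^bsub>S\<^esub> x" if "C \<in> E" for C using Eform that by simp
  have Eform2: "H #>\<^bsub>S\<^esub> x \<in> E" if "x \<in> A" for x using Eform[of "H #>\<^bsub>S\<^esub> x"] that by blast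
  have img: "lam g ` C \<in> E" if g: "g \<in> A" and C: "C \<in> E" for g C
  proof -
    obtain x where x: "x \<in> A" "C = H #>\<^bsub>S\<^esub> x" using Eform1[OF C] by blast
    have "lam g ` C = H #>\<^bsub>S\<^esub> lam g x" using lam_coset[OF g x(1)] x(2) unfolding H_def by simp
    then show ?thesis using Eform2 x(1) g lam_closed by simp
  qed
  have EA: "C \<subseteq> A" if C: "C \<in> E" for C
  proof -
    obtain x where "x \<in> A" "C = H #>\<^bsub>S\<^esub> x" using Eform1[OF C] by blast
    then show ?thesis using S.r_coset_subset_G[OF HA] by simp
  qed
  have comp: "lam g ` (lam h ` C) = lam (g \<otimes>\<^bsub>T\<^esub> h) ` C" if "g \<in> A" "h \<in> A" "C \<in> E" for g h C
  proof -
    have *: "\<And>y. y \<in> C \<Longrightarrow> lam g (lam h y) = lam (g \<otimes>\<^bsub>T\<^esub> h) y"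
      using that EA lam_comp by blast
    have "lam g ` (lam h ` C) = (\<lambda>y. lam g (lam h y)) ` C" by (simp only: image_image)
    also have "\<dots> = lam (g \<otimes>\<^bsub>T\<^esub> h) ` C" by (rule image_cong) (simp_all add: *)
    finally show ?thesis .
  qed
  have idimg: "lam \<one>\<^bsub>S\<^esub> ` C = C" if "C \<in> E" for C
  proof -
    have *: "\<And>y. y \<in> C \<Longrightarrow> lam \<one>\<^bsub>S\<^esub> y = y" using that EA lam_one by blast
    have "lam \<one>\<^bsub>S\<^esub> ` C = (\<lambda>y. y) ` C" by (rule image_cong) (simp_all add: *)
    then show ?thesis by simp
  qed
  have inv1: "inv\<^bsub>T\<^esub> g \<otimes>\<^bsub>T\<^esub> g = \<one>\<^bsub>S\<^esub>" "g \<otimes>\<^bsub>T\<^esub> inv\<^bsub>T\<^esub> g = \<one>\<^bsub>S\<^esub>" if "g \<in> A" for g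
    using that carr one_eq T.l_inv T.r_inv by auto
  have Bij: "\<phi> g \<in> Bij E" if g: "g \<in> A" for g
  proof -
    have gi: "inv\<^bsub>T\<^esub> g \<in> A" using g by simp
    have "bij_betw (\<lambda>C. lam g ` C) E E"
    proof (rule bij_betw_byWitness[where f'="\<lambda>C. lam (inv\<^bsub>T\<^esub> g) ` C"])
      show "\<forall>C\<in>E. lam (inv\<^bsub>T\<^esub> g) ` lam g ` C = C"
      proof
        fix C assume C: "C \<in> E"
        show "lam (inv\<^bsub>T\<^esub> g) ` lam g ` C = C"
          using comp[OF gi g C] inv1(1)[OF g] idimg[OF C] by simp
      qed
      show "\<forall>C\<in>E. lam g ` lam (inv\<^bsub>T\<^esub> g) ` C = C"
      proof
        fix C assume C: "C \<in> E"
        show "lam g ` lam (inv\<^bsub>T\<^esub> g) ` C = C"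
          using comp[OF g gi C] inv1(2)[OF g] idimg[OF C] by simp
      qed
      show "(\<lambda>C. lam g ` C) ` E \<subseteq> E" using img g by auto
      show "(\<lambda>C. lam (inv\<^bsub>T\<^esub> g) ` C) ` E \<subseteq> E" using img g by auto
    qed
    then have "bij_betw (\<phi> g) E E" unfolding \<phi>_def by (simp only: bij_betw_restrict_eq)
    moreover have "\<phi> g \<in> extensional E" unfolding \<phi>_def by (rule restrict_extensional)
    ultimately show ?thesis unfolding Bij_def by blast
  qed
  have hom: "\<phi> \<in> hom T (BijGroup E)"
  proof (rule homI)
    show "\<phi> g \<in> carrier (BijGroup E)" if "g \<in> carrier T" for g
      using Bij that carr by (simp add: BijGroup_def)
    show "\<phi> (g \<otimes>\<^bsub>T\<^esub> h) = \<phi> g \<otimes>\<^bsub>BijGroup E\<^esub> \<phi> h" if "g \<in> carrier T" "h \<in> carrier T" for g h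
    proof -
      have g: "g \<in> A" "h \<in> A" using that carr by auto
      have "\<phi> g \<otimes>\<^bsub>BijGroup E\<^esub> \<phi> h = compose E (\<phi> g) (\<phi> h)"
        using Bij g by (simp add: BijGroup_def)
      also have "\<dots> = \<phi> (g \<otimes>\<^bsub>T\<^esub> h)"
        unfolding compose_def \<phi>_def using img g comp by (auto intro!: ext)
      finally show ?thesis by simp
    qed
  qed
  interpret act: group_action T E \<phi>
    unfolding group_action_def group_hom_def group_hom_axioms_def
    using T.is_group group_BijGroup hom by blast
  have finE: "finite E"
  proof -
    have "E \<subseteq> Pow A" using EA by blast
    then show ?thesis using fin finite_subset by blast
  qed
  have ordT: "order T = p ^ n" using carr cA by (simp add: order_def)
  have lag: "card E * card H = p ^ n"
    using S.lagrange[OF H.subgroup_axioms] cA unfolding E_def order_def by simp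
  have "card H < card A"
    using HA ne fin unfolding H_def by (simp add: psubset_card_mono psubset_eq)
  then have "card E \<noteq> 1" using lag cA by auto
  moreover have "card E dvd p ^ n" using lag by (metis dvd_triv_left)
  ultimately have pE: "p dvd card E"
  proof -
    obtain k where "card E = p ^ k" using divides_primepow_nat[OF p] \<open>card E dvd p ^ n\<close> by blast
    moreover have "k \<noteq> 0" using \<open>card E \<noteq> 1\<close> calculation by auto
    ultimately show ?thesis by (metis dvd_power neq0_conv)
  qed
  have H0: "H \<in> E"
    using Eform2[OF S.one_closed] HA S.coset_mult_one by simp
  have fH: "\<forall>g\<in>carrier T. \<phi> g H = H"
    using H0 F_lam_image carr unfolding \<phi>_def H_def by auto
  obtain C where C: "C \<in> E" "C \<noteq> H" "\<forall>g\<in>carrier T. \<phi> g C = C"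
    using act.pgroup_fixed[OF finE p ordT pE H0 fH] by blast
  obtain x where x: "x \<in> A" "C = H #>\<^bsub>S\<^esub> x" using Eform1[OF C(1)] by blast
  have "x \<notin> H" using H.rcos_const[OF S.is_group] x C(2) by blast
  moreover have "D a x \<in> H" if a: "a \<in> A" for a
  proof -
    have "lam a ` C = C" using C(3) a carr C(1) unfolding \<phi>_def by auto
    then have "H #>\<^bsub>S\<^esub> lam a x = H #>\<^bsub>S\<^esub> x" using lam_coset[OF a x(1)] x(2) unfolding H_def by simp
    moreover have "lam a x \<in> H #>\<^bsub>S\<^esub> lam a x"
      using S.rcos_self[OF _ H.subgroup_axioms] a x by simp
    ultimately have "lam a x \<in> H #>\<^bsub>S\<^esub> x" by simp
    then show ?thesis using H.rcos_module_imp[OF S.is_group x(1)] unfolding D_def by simp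
  qed
  ultimately show ?thesis using x(1) unfolding H_def by auto
qed


lemma sub_card:
  assumes fin: "finite A" and p: "Factorial_Ring.prime (p::nat)" and cA: "card A = p ^ n"
    and H: "subgroup H S"
  shows "\<exists>k. card H = p ^ k"
proof -
  have "card (rcosets\<^bsub>S\<^esub> H) * card H = p ^ n"
    using S.lagrange[OF H] cA unfolding order_def by simp
  then have "card H dvd p ^ n" by (metis dvd_triv_right)
  then show ?thesis using divides_primepow_nat[OF p] by blast
qed

lemma F_big:
  assumes fin: "finite A" and p: "Factorial_Ring.prime (p::nat)" and cA: "card A = p ^ n"
  shows "F j = A \<or> p ^ j \<le> card (F j)"
proof (induction j)
  case 0 then show ?case by simp
next
  case (Suc j)
  show ?case
  proof (cases "F (Suc j) = A")
    case True then show ?thesis by simp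
  next
    case False
    have FA: "F k \<subseteq> A" for k using F_carr by blast
    have ne: "F j \<noteq> A" using False F_mono_Suc[of j] FA[of "Suc j"] by blast
    then have c1: "p ^ j \<le> card (F j)" using Suc by simp
    obtain x where x: "x \<in> F (Suc j)" "x \<notin> F j" using F_growth[OF fin p cA ne] by blast
    have ps: "F j \<subset> F (Suc j)" using F_mono_Suc x by blast
    have fs: "finite (F (Suc j))" using FA fin finite_subset by blast
    have lt: "card (F j) < card (F (Suc j))" using psubset_card_mono[OF fs ps] .
    obtain a b where a: "card (F j) = p ^ a" and b: "card (F (Suc j)) = p ^ b"
      using sub_card[OF fin p cA F_sub] by metis
    have p1: "1 < p" using p prime_gt_1_nat by blast
    have "a < b" using lt a b p1 by (metis power_strict_increasing_iff)
    then have "p ^ Suc a \<le> p ^ b" using p1 by (intro power_increasing) auto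
    then have "p * card (F j) \<le> card (F (Suc j))" using a b by simp
    moreover have "p ^ Suc j \<le> p * card (F j)" using c1 by simp
    ultimately have "p ^ Suc j \<le> card (F (Suc j))" by (rule order_trans[rotated])
    then show ?thesis by (rule disjI2)
  qed
qed

lemma F_top:
  assumes fin: "finite A" and p: "Factorial_Ring.prime (p::nat)" and cA: "card A = p ^ n"
  shows "F n = A"
proof -
  have FA: "F n \<subseteq> A" using F_carr by blast
  from F_big[OF fin p cA, of n] show ?thesis
  proof
    assume "p ^ n \<le> card (F n)"
    then have "card A \<le> card (F n)" using cA by simp
    then show ?thesis using FA fin by (meson card_seteq)
  qed
qed


end


context brc begin

lemma Dpow_closed[simp]: "a \<in> A \<Longrightarrow> x \<in> A \<Longrightarrow> (D a ^^ k) x \<in> A"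
  by (induction k) auto

lemma finprod_hom:
  assumes h: "group_hom S S h" and f: "\<And>k. f k \<in> A"
  shows "h (finprod S f {..(N::nat)}) = finprod S (\<lambda>k. h (f k)) {..N}"
proof (induction N)
  case 0 then show ?case using f group_hom.hom_closed[OF h] by simp
next
  case (Suc N)
  have hc: "h (f k) \<in> A" for k using f group_hom.hom_closed[OF h] by blast
  show ?case using f hc Suc group_hom.hom_mult[OF h] by (simp add: Pi_def S.finprod_closed)
qed

lemma expand:
  assumes a: "a \<in> A" and nil: "(D a ^^ Suc N) a = \<one>\<^bsub>S\<^esub>"
  shows "a [^]\<^bsub>T\<^esub> m = finprod S (\<lambda>k. (D a ^^ k) a [^]\<^bsub>S\<^esub> (m choose Suc k)) {..N}"
proof (induction m)
  case 0
  have "finprod S (\<lambda>k. (D a ^^ k) a [^]\<^bsub>S\<^esub> (0 choose Suc k)) {..N} = finprod S (\<lambda>k. \<one>\<^bsub>S\<^esub>) {..N}"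
    by (rule S.finprod_cong) (auto simp: Pi_def)
  then show ?case by (simp add: one_eq)
next
  case (Suc m)
  define y where "y k = (D a ^^ k) a" for k
  have yA[simp]: "y k \<in> A" for k using a unfolding y_def by simp
  have ySuc: "y (Suc k) = D a (y k)" for k unfolding y_def by simp
  define P1 where "P1 = finprod S (\<lambda>k. y k [^]\<^bsub>S\<^esub> (m choose Suc k)) {..N}"
  define P2 where "P2 = finprod S (\<lambda>k. y (Suc k) [^]\<^bsub>S\<^esub> (m choose Suc k)) {..N}"
  define G where "G = finprod S (\<lambda>k. y k [^]\<^bsub>S\<^esub> (m choose k)) {..N}"
  have P1A: "P1 \<in> A" and P2A: "P2 \<in> A" and GA: "G \<in> A"
    unfolding P1_def P2_def G_def by (auto simp: Pi_def)
  have IH: "a [^]\<^bsub>T\<^esub> m = P1" using Suc unfolding P1_def y_def .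
  have "a [^]\<^bsub>T\<^esub> Suc m = a \<otimes>\<^bsub>T\<^esub> a [^]\<^bsub>T\<^esub> m"
    using a carr T.nat_pow_Suc2 by auto
  also have "\<dots> = a \<otimes>\<^bsub>S\<^esub> lam a P1" using IH a P1A circ_eq by simp
  also have "lam a P1 = finprod S (\<lambda>k. lam a (y k [^]\<^bsub>S\<^esub> (m choose Suc k))) {..N}"
    unfolding P1_def by (rule finprod_hom[OF lam_hom[OF a]]) simp
  also have "\<dots> = finprod S (\<lambda>k. y k [^]\<^bsub>S\<^esub> (m choose Suc k) \<otimes>\<^bsub>S\<^esub> y (Suc k) [^]\<^bsub>S\<^esub> (m choose Suc k)) {..N}"
  proof (rule S.finprod_cong)
    show "\<And>k. k \<in> {..N} =simp=> lam a (y k [^]\<^bsub>S\<^esub> (m choose Suc k)) =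
        y k [^]\<^bsub>S\<^esub> (m choose Suc k) \<otimes>\<^bsub>S\<^esub> y (Suc k) [^]\<^bsub>S\<^esub> (m choose Suc k)"
      unfolding simp_implies_def using a
      by (simp add: lam_pow lam_D D_pow ySuc S.pow_mult_distrib S.m_comm)
  qed (auto simp: Pi_def a)
  also have "\<dots> = P1 \<otimes>\<^bsub>S\<^esub> P2" unfolding P1_def P2_def
    by (rule S.finprod_multf) (auto simp: Pi_def)
  finally have L: "a [^]\<^bsub>T\<^esub> Suc m = a \<otimes>\<^bsub>S\<^esub> (P1 \<otimes>\<^bsub>S\<^esub> P2)" .
  have "finprod S (\<lambda>k. y k [^]\<^bsub>S\<^esub> (m choose k)) {..Suc N} = y (Suc N) [^]\<^bsub>S\<^esub> (m choose Suc N) \<otimes>\<^bsub>S\<^esub> G"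
    unfolding G_def by (rule S.finprod_Suc) (auto simp: Pi_def)
  also have "y (Suc N) = \<one>\<^bsub>S\<^esub>" using nil unfolding y_def .
  finally have G1: "finprod S (\<lambda>k. y k [^]\<^bsub>S\<^esub> (m choose k)) {..Suc N} = G" using GA by simp
  have "finprod S (\<lambda>k. y k [^]\<^bsub>S\<^esub> (m choose k)) {..Suc N} = P2 \<otimes>\<^bsub>S\<^esub> y 0 [^]\<^bsub>S\<^esub> (m choose 0)"
    unfolding P2_def by (rule S.finprod_Suc2) (auto simp: Pi_def)
  then have G2: "G = P2 \<otimes>\<^bsub>S\<^esub> a" using G1 a by (simp add: y_def)
  have "finprod S (\<lambda>k. y k [^]\<^bsub>S\<^esub> (Suc m choose Suc k)) {..N}
      = finprod S (\<lambda>k. y k [^]\<^bsub>S\<^esub> (m choose Suc k) \<otimes>\<^bsub>S\<^esub> y k [^]\<^bsub>S\<^esub> (m choose k)) {..N}"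
  proof (rule S.finprod_cong)
    show "\<And>k. k \<in> {..N} =simp=> y k [^]\<^bsub>S\<^esub> (Suc m choose Suc k) =
        y k [^]\<^bsub>S\<^esub> (m choose Suc k) \<otimes>\<^bsub>S\<^esub> y k [^]\<^bsub>S\<^esub> (m choose k)"
      unfolding simp_implies_def by (simp add: S.nat_pow_mult add.commute)
  qed (auto simp: Pi_def)
  also have "\<dots> = P1 \<otimes>\<^bsub>S\<^esub> G" unfolding P1_def G_def
    by (rule S.finprod_multf) (auto simp: Pi_def)
  finally have R: "finprod S (\<lambda>k. y k [^]\<^bsub>S\<^esub> (Suc m choose Suc k)) {..N} = P1 \<otimes>\<^bsub>S\<^esub> G" .
  show ?case unfolding y_def[symmetric] L R G2 using a P1A P2A by (simp add: S.m_ac)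
qed


lemma sub_pow: "subgroup H S \<Longrightarrow> x \<in> H \<Longrightarrow> x [^]\<^bsub>S\<^esub> (q::nat) \<in> H"
  by (induction q) (auto simp: subgroup.one_closed subgroup.m_closed subgroup.mem_carrier)

lemma finprod_sub:
  assumes H: "subgroup H S" and fin: "finite I"
  shows "(\<forall>k\<in>I. g k \<in> H) \<Longrightarrow> finprod S g I \<in> H"
  using fin
proof (induction I rule: finite_induct)
  case empty then show ?case using H subgroup.one_closed by auto
next
  case (insert x I)
  have c: "g \<in> I \<rightarrow> A" "g x \<in> A" using insert.prems subgroup.mem_carrier[OF H] by (auto simp: Pi_def)
  show ?case using insert c S.finprod_insert[OF insert(1,2) c] subgroup.m_closed[OF H] by simp
qed

lemma pow_img_sub:
  assumes H: "subgroup H S"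
  shows "subgroup ((\<lambda>x. x [^]\<^bsub>S\<^esub> (q::nat)) ` H) S"
proof (rule S.subgroupI)
  have HA: "H \<subseteq> A" using subgroup.subset[OF H] .
  show "(\<lambda>x. x [^]\<^bsub>S\<^esub> q) ` H \<subseteq> A" using HA by auto
  show "(\<lambda>x. x [^]\<^bsub>S\<^esub> q) ` H \<noteq> {}" using subgroup.one_closed[OF H] by blast
  show "inv\<^bsub>S\<^esub> y \<in> (\<lambda>x. x [^]\<^bsub>S\<^esub> q) ` H" if yy: "y \<in> (\<lambda>x. x [^]\<^bsub>S\<^esub> q) ` H" for y
  proof -
    obtain x where x: "x \<in> H" "y = x [^]\<^bsub>S\<^esub> q" using yy by blast
    have xA: "x \<in> A" using x HA by blast
    have "inv\<^bsub>S\<^esub> y = (inv\<^bsub>S\<^esub> x) [^]\<^bsub>S\<^esub> q" using S.nat_pow_inv[OF xA, of q] x(2) by simp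
    moreover have "inv\<^bsub>S\<^esub> x \<in> H" by (rule subgroup.m_inv_closed[OF H x(1)])
    ultimately show ?thesis by (rule image_eqI)
  qed
  show "y \<otimes>\<^bsub>S\<^esub> z \<in> (\<lambda>x. x [^]\<^bsub>S\<^esub> q) ` H"
    if yy: "y \<in> (\<lambda>x. x [^]\<^bsub>S\<^esub> q) ` H" and zz: "z \<in> (\<lambda>x. x [^]\<^bsub>S\<^esub> q) ` H" for y z
  proof -
    obtain x where x: "x \<in> H" "y = x [^]\<^bsub>S\<^esub> q" using yy by blast
    obtain w where w: "w \<in> H" "z = w [^]\<^bsub>S\<^esub> q" using zz by blast
    have "y \<otimes>\<^bsub>S\<^esub> z = (x \<otimes>\<^bsub>S\<^esub> w) [^]\<^bsub>S\<^esub> q"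
    proof -
      have xA: "x \<in> A" "w \<in> A" using x w HA by blast+
      show ?thesis using S.pow_mult_distrib[OF S.m_comm[OF xA] xA, of q] x(2) w(2) by simp
    qed
    moreover have "x \<otimes>\<^bsub>S\<^esub> w \<in> H" by (rule subgroup.m_closed[OF H x(1) w(1)])
    ultimately show ?thesis by (rule image_eqI)
  qed
qed

lemma Fpow: "x \<in> F m \<Longrightarrow> a \<in> A \<Longrightarrow> (D a ^^ k) x \<in> F (m - k)"
proof (induction k)
  case 0 then show ?case by simp
next
  case (Suc k)
  note IH = Suc.IH[OF Suc.prems] and aA = Suc.prems(2)
  show ?case
  proof (cases "m - k")
    case 0
    then have "(D a ^^ k) x = \<one>\<^bsub>S\<^esub>" using IH by simp
    then show ?thesis using 0 aA by simp
  next
    case (Suc r)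
    then have r: "m - Suc k = r" by simp
    have "(D a ^^ k) x \<in> F (Suc r)" using IH Suc by simp
    from F_D[OF this aA] show ?thesis using r by simp
  qed
qed

lemma binom_dvd:
  assumes p: "Factorial_Ring.prime (p::nat)" and k: "0 < k" "k < p"
  shows "p ^ i dvd (p ^ i choose k)"
proof -
  have "k * (p ^ i choose k) = p ^ i * ((p ^ i - 1) choose (k - 1))"
    using times_binomial_minus1_eq[OF k(1)] .
  then have d: "p ^ i dvd (p ^ i choose k) * k" by (metis dvd_triv_left mult.commute)
  have "\<not> p dvd k" using k by (auto dest: dvd_imp_le)
  then have "coprime p k" using prime_imp_coprime[OF p] by blast
  then have "coprime (p ^ i) k" by simp
  then show ?thesis using d coprime_dvd_mult_left_iff by blast
qed

lemma main:
  assumes p: "Factorial_Ring.prime (p::nat)" and a: "a \<in> F (Suc j)" and jp: "Suc j < p"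
  shows "\<exists>r \<in> (\<lambda>x. x [^]\<^bsub>S\<^esub> (p ^ i)) ` F j. a [^]\<^bsub>T\<^esub> (p ^ i) = a [^]\<^bsub>S\<^esub> (p ^ i) \<otimes>\<^bsub>S\<^esub> r"
proof -
  have aA: "a \<in> A" using a F_carr by blast
  define y where "y k = (D a ^^ k) a" for k
  have yA: "y k \<in> A" for k unfolding y_def using aA by simp
  have yF: "y k \<in> F (Suc j - k)" for k unfolding y_def using Fpow[OF a aA] .
  have nil: "(D a ^^ Suc j) a = \<one>\<^bsub>S\<^esub>" using yF[of "Suc j"] unfolding y_def by simp
  define f where "f k = y k [^]\<^bsub>S\<^esub> (p ^ i choose Suc k)" for k
  have fA: "f \<in> {..j} \<rightarrow> A" unfolding f_def using yA by simp
  have e: "a [^]\<^bsub>T\<^esub> (p ^ i) = finprod S f {..j}"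
    unfolding f_def y_def using expand[OF aA nil] .
  also have "\<dots> = f 0 \<otimes>\<^bsub>S\<^esub> finprod S f {Suc 0..j}"
    using S.finprod_0'[OF fA] by simp
  also have "f 0 = a [^]\<^bsub>S\<^esub> (p ^ i)" unfolding f_def y_def by simp
  finally have eq: "a [^]\<^bsub>T\<^esub> (p ^ i) = a [^]\<^bsub>S\<^esub> (p ^ i) \<otimes>\<^bsub>S\<^esub> finprod S f {Suc 0..j}" .
  have "finprod S f {Suc 0..j} \<in> (\<lambda>x. x [^]\<^bsub>S\<^esub> (p ^ i)) ` F j"
  proof (rule finprod_sub[OF pow_img_sub[OF F_sub]])
    show "finite {Suc 0..j}" by simp
    show "\<forall>k\<in>{Suc 0..j}. f k \<in> (\<lambda>x. x [^]\<^bsub>S\<^esub> (p ^ i)) ` F j"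
    proof
      fix k assume k: "k \<in> {Suc 0..j}"
      have "p ^ i dvd (p ^ i choose Suc k)" using binom_dvd[OF p, of "Suc k"] k jp by simp
      then obtain c where c: "(p ^ i choose Suc k) = p ^ i * c" by blast
      have "Suc j - k \<le> j" using k by auto
      then have "y k \<in> F j" using yF[of k] F_mono[of "Suc j - k" j] by blast
      then have yc: "y k [^]\<^bsub>S\<^esub> c \<in> F j" using sub_pow[OF F_sub] by blast
      have "f k = (y k [^]\<^bsub>S\<^esub> c) [^]\<^bsub>S\<^esub> (p ^ i)"
        unfolding f_def c using yA S.nat_pow_pow by (simp add: mult.commute)
      then show "f k \<in> (\<lambda>x. x [^]\<^bsub>S\<^esub> (p ^ i)) ` F j" using yc by blast
    qed
  qed
  then show ?thesis using eq by (rule bexI[rotated])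
qed

end



lemma (in group) inv_cancel_l: "g \<in> carrier G \<Longrightarrow> z \<in> carrier G \<Longrightarrow> inv g \<otimes> (g \<otimes> z) = z"
  by (simp add: m_assoc[symmetric])

lemma (in group) conj_mult:
  "g \<in> carrier G \<Longrightarrow> a \<in> carrier G \<Longrightarrow> b \<in> carrier G \<Longrightarrow>
   g \<otimes> (a \<otimes> b) \<otimes> inv g = (g \<otimes> a \<otimes> inv g) \<otimes> (g \<otimes> b \<otimes> inv g)"
  by (simp add: m_assoc inv_cancel_l)

lemma (in group) conj_pow:
  "g \<in> carrier G \<Longrightarrow> x \<in> carrier G \<Longrightarrow> g \<otimes> x [^] (m::nat) \<otimes> inv g = (g \<otimes> x \<otimes> inv g) [^] m"
proof (induction m)
  case 0 then show ?case by simp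
next
  case (Suc m)
  have "g \<otimes> x [^] Suc m \<otimes> inv g = g \<otimes> (x [^] m \<otimes> x) \<otimes> inv g" by simp
  also have "\<dots> = (g \<otimes> x [^] m \<otimes> inv g) \<otimes> (g \<otimes> x \<otimes> inv g)"
    using Suc.prems by (simp add: conj_mult)
  finally show ?case using Suc by simp
qed

lemma (in group) conj_inv:
  "g \<in> carrier G \<Longrightarrow> x \<in> carrier G \<Longrightarrow> g \<otimes> inv x \<otimes> inv g = inv (g \<otimes> x \<otimes> inv g)"
  by (simp add: inv_mult_group m_assoc)

context brc begin

lemma final:
  assumes fin: "finite A" and p: "Factorial_Ring.prime (p::nat)" and cA: "card A = p ^ n"
    and pn: "p > n + 1"
  shows "brace_ideal S T ((\<lambda>x. x [^]\<^bsub>S\<^esub> (p ^ i)) ` A)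
    \<and> generate T ((\<lambda>x. x [^]\<^bsub>T\<^esub> (p ^ i)) ` A) = (\<lambda>x. x [^]\<^bsub>S\<^esub> (p ^ i)) ` A"
proof -
  define Q where "Q = p ^ i"
  define powQ where "powQ x = x [^]\<^bsub>S\<^esub> Q" for x
  define PI where "PI = powQ ` A"
  define Xg where "Xg = (\<lambda>x. x [^]\<^bsub>T\<^esub> Q) ` A"
  define B where "B = generate T Xg"
  have Ftop: "F n = A" using F_top[OF fin p cA] .
  have subS: "subgroup PI S" unfolding PI_def powQ_def by (rule pow_img_sub[OF S.subgroup_self])
  have PIA: "PI \<subseteq> A" using subgroup.subset[OF subS] .
  have powQA: "powQ x \<in> A" if "x \<in> A" for x using that unfolding powQ_def by simp
  have lam_powQ: "lam g (powQ x) = powQ (lam g x)" if "g \<in> A" "x \<in> A" for g x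
    using that lam_pow unfolding powQ_def by simp
  have inPI: "powQ x \<in> PI" if "x \<in> A" for x using that unfolding PI_def by blast
  have lamPI: "lam g u \<in> PI" if g: "g \<in> A" and u: "u \<in> PI" for g u
  proof -
    obtain x where x: "x \<in> A" "u = powQ x" using u unfolding PI_def by blast
    show ?thesis using lam_powQ[OF g x(1)] x inPI g by simp
  qed
  have closT: "u \<otimes>\<^bsub>T\<^esub> v \<in> PI" if u: "u \<in> PI" and v: "v \<in> PI" for u v
  proof -
    have uA: "u \<in> A" and vA: "v \<in> A" using u v PIA by blast+
    have "u \<otimes>\<^bsub>T\<^esub> v = u \<otimes>\<^bsub>S\<^esub> lam u v" using circ_eq[OF uA vA] .
    then show ?thesis using subgroup.m_closed[OF subS u lamPI[OF uA v]] by simp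
  qed
  have invT: "inv\<^bsub>T\<^esub> u \<in> PI" if u: "u \<in> PI" for u
  proof -
    have uA: "u \<in> A" using u PIA by blast
    define w where "w = inv\<^bsub>T\<^esub> u"
    have wA: "w \<in> A" unfolding w_def using uA by simp
    have "u \<otimes>\<^bsub>T\<^esub> w = \<one>\<^bsub>S\<^esub>" unfolding w_def using uA carr one_eq T.r_inv by auto
    then have "u \<otimes>\<^bsub>S\<^esub> lam u w = \<one>\<^bsub>S\<^esub>" using circ_eq[OF uA wA] by simp
    then have "lam u w \<otimes>\<^bsub>S\<^esub> u = \<one>\<^bsub>S\<^esub>" using uA wA S.m_comm by simp
    then have e: "inv\<^bsub>S\<^esub> u = lam u w" using S.inv_equality uA wA by simp
    have "w = lam (inv\<^bsub>T\<^esub> u) (lam u w)" using lam_inv_left[OF uA wA] by simp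
    also have "\<dots> = lam (inv\<^bsub>T\<^esub> u) (inv\<^bsub>S\<^esub> u)" using e by simp
    finally have weq: "inv\<^bsub>T\<^esub> u = lam (inv\<^bsub>T\<^esub> u) (inv\<^bsub>S\<^esub> u)" unfolding w_def .
    have "inv\<^bsub>S\<^esub> u \<in> PI" using subgroup.m_inv_closed[OF subS u] .
    then have "lam (inv\<^bsub>T\<^esub> u) (inv\<^bsub>S\<^esub> u) \<in> PI" by (rule lamPI[OF Tinv_closed[OF uA]])
    with weq show ?thesis by (rule ssubst)
  qed
  have subT: "subgroup PI T"
  proof (rule T.subgroupI)
    show "PI \<subseteq> carrier T" using PIA carr by simp
    show "PI \<noteq> {}" using subgroup.one_closed[OF subS] by blast
  qed (use invT closT in auto)
  have XA: "Xg \<subseteq> carrier T" unfolding Xg_def using carr by auto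
  have Xsub: "Xg \<subseteq> PI"
  proof
    fix u assume "u \<in> Xg"
    then obtain a where a: "a \<in> A" "u = a [^]\<^bsub>T\<^esub> Q" unfolding Xg_def by blast
    have "a \<in> F (Suc n)" using a Ftop F_mono_Suc[of n] by blast
    from main[OF p this, of i] pn obtain r where
      r: "r \<in> (\<lambda>x. x [^]\<^bsub>S\<^esub> (p ^ i)) ` F n" "a [^]\<^bsub>T\<^esub> (p ^ i) = a [^]\<^bsub>S\<^esub> (p ^ i) \<otimes>\<^bsub>S\<^esub> r"
      by auto
    have rP: "r \<in> PI" using r(1) Ftop unfolding PI_def powQ_def Q_def by simp
    have "u = powQ a \<otimes>\<^bsub>S\<^esub> r" using r(2) a unfolding powQ_def Q_def by simp
    then show "u \<in> PI" using subgroup.m_closed[OF subS inPI[OF a(1)] rP] by simp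
  qed
  have BP: "B \<subseteq> PI" unfolding B_def by (rule T.generate_subgroup_incl[OF Xsub subT])
  have PBj: "j \<le> n \<Longrightarrow> powQ ` F j \<subseteq> B" for j
  proof (induction j)
    case 0
    have "powQ \<one>\<^bsub>S\<^esub> = \<one>\<^bsub>T\<^esub>" unfolding powQ_def using one_eq by simp
    then show ?case unfolding B_def using generate.one by simp
  next
    case (Suc j)
    have IH: "powQ ` F j \<subseteq> B" using Suc by simp
    show ?case
    proof
      fix y assume "y \<in> powQ ` F (Suc j)"
      then obtain a where a: "a \<in> F (Suc j)" "y = powQ a" by blast
      have aA: "a \<in> A" using a F_carr by blast
      have jp: "Suc j < p" using Suc.prems pn by simp
      obtain r where
        r: "r \<in> (\<lambda>x. x [^]\<^bsub>S\<^esub> (p ^ i)) ` F j" "a [^]\<^bsub>T\<^esub> (p ^ i) = a [^]\<^bsub>S\<^esub> (p ^ i) \<otimes>\<^bsub>S\<^esub> r"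
        using main[OF p a(1) jp, of i] by blast
      obtain f where f: "f \<in> F j" "r = powQ f" using r(1) unfolding powQ_def Q_def by blast
      have fA: "f \<in> A" using f F_carr by blast
      define u where "u = a [^]\<^bsub>T\<^esub> Q"
      have uA: "u \<in> A" unfolding u_def using aA by simp
      have uB: "u \<in> B" unfolding B_def u_def Xg_def using aA by (blast intro: generate.incl)
      have rA: "r \<in> A" using f fA powQA by simp
      have eq: "u = powQ a \<otimes>\<^bsub>S\<^esub> r" using r(2) unfolding u_def powQ_def Q_def .
      define v where "v = inv\<^bsub>S\<^esub> r"
      have vA: "v \<in> A" unfolding v_def using rA by simp
      have v_powQ: "v = powQ (inv\<^bsub>S\<^esub> f)" unfolding v_def f(2) powQ_def using S.nat_pow_inv[OF fA] by simp
      have ya: "y = u \<otimes>\<^bsub>S\<^esub> v" unfolding eq v_def a(2) using aA rA powQA by (simp add: S.m_assoc)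
      define z where "z = lam (inv\<^bsub>T\<^esub> u) v"
      have zA: "z \<in> A" unfolding z_def using uA vA by simp
      have "u \<otimes>\<^bsub>T\<^esub> z = u \<otimes>\<^bsub>S\<^esub> lam u z" using circ_eq[OF uA zA] .
      also have "lam u z = v" unfolding z_def using lam_inv_right[OF uA vA] .
      finally have yz: "y = u \<otimes>\<^bsub>T\<^esub> z" using ya by simp
      have "inv\<^bsub>S\<^esub> f \<in> F j" using subgroup.m_inv_closed[OF F_sub f(1)] .
      then have "lam (inv\<^bsub>T\<^esub> u) (inv\<^bsub>S\<^esub> f) \<in> F j" using F_lam uA by simp
      moreover have "z = powQ (lam (inv\<^bsub>T\<^esub> u) (inv\<^bsub>S\<^esub> f))"
        unfolding z_def v_powQ using lam_powQ uA fA by simp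
      ultimately have "z \<in> B" using IH by blast
      then show "y \<in> B" using yz uB unfolding B_def by (blast intro: generate.eng)
    qed
  qed
  have PB: "PI \<subseteq> B" using PBj[of n] Ftop unfolding PI_def by simp
  have BPI: "B = PI" using BP PB by blast
  have conjB: "g \<otimes>\<^bsub>T\<^esub> h \<otimes>\<^bsub>T\<^esub> inv\<^bsub>T\<^esub> g \<in> B" if g: "g \<in> carrier T" and h: "h \<in> B" for g h
    using h unfolding B_def
  proof (induction rule: generate.induct)
    case one then show ?case using g by (simp add: generate.one)
  next
    case (incl x)
    then obtain a where a: "a \<in> A" "x = a [^]\<^bsub>T\<^esub> Q" unfolding Xg_def by blast
    have "g \<otimes>\<^bsub>T\<^esub> x \<otimes>\<^bsub>T\<^esub> inv\<^bsub>T\<^esub> g = (g \<otimes>\<^bsub>T\<^esub> a \<otimes>\<^bsub>T\<^esub> inv\<^bsub>T\<^esub> g) [^]\<^bsub>T\<^esub> Q"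
      using a g carr T.conj_pow by simp
    moreover have "g \<otimes>\<^bsub>T\<^esub> a \<otimes>\<^bsub>T\<^esub> inv\<^bsub>T\<^esub> g \<in> A" using g a carr by simp
    ultimately show ?case unfolding Xg_def by (blast intro: generate.incl)
  next
    case (inv x)
    then obtain a where a: "a \<in> A" "x = a [^]\<^bsub>T\<^esub> Q" unfolding Xg_def by blast
    have "g \<otimes>\<^bsub>T\<^esub> inv\<^bsub>T\<^esub> x \<otimes>\<^bsub>T\<^esub> inv\<^bsub>T\<^esub> g = inv\<^bsub>T\<^esub> ((g \<otimes>\<^bsub>T\<^esub> a \<otimes>\<^bsub>T\<^esub> inv\<^bsub>T\<^esub> g) [^]\<^bsub>T\<^esub> Q)"
      using a g carr T.conj_pow T.conj_inv by simp
    moreover have "g \<otimes>\<^bsub>T\<^esub> a \<otimes>\<^bsub>T\<^esub> inv\<^bsub>T\<^esub> g \<in> A" using g a carr by simp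
    then have "(g \<otimes>\<^bsub>T\<^esub> a \<otimes>\<^bsub>T\<^esub> inv\<^bsub>T\<^esub> g) [^]\<^bsub>T\<^esub> Q \<in> Xg" unfolding Xg_def by blast
    then have "inv\<^bsub>T\<^esub> ((g \<otimes>\<^bsub>T\<^esub> a \<otimes>\<^bsub>T\<^esub> inv\<^bsub>T\<^esub> g) [^]\<^bsub>T\<^esub> Q) \<in> generate T Xg" by (rule generate.inv)
    ultimately show ?case by simp
  next
    case (eng h1 h2)
    have c: "h1 \<in> carrier T" "h2 \<in> carrier T"
      using eng.hyps T.generate_in_carrier[OF XA] unfolding B_def by blast+
    show ?case using T.conj_mult[OF g c] eng.IH by (simp add: generate.eng)
  qed
  have normal: "PI \<lhd> T"
    unfolding T.normal_inv_iff using subT conjB BPI by blast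
  have star: "brace_star S T a x \<in> PI" if a: "a \<in> A" and x: "x \<in> PI" for a x
  proof -
    obtain y where y: "y \<in> A" "x = powQ y" using x unfolding PI_def by blast
    have "brace_star S T a x = powQ (D a y)" unfolding star_eq y(2) powQ_def using D_pow a y by simp
    then show ?thesis using inPI a y by simp
  qed
  have "brace_ideal S T PI" unfolding brace_ideal_def using subS normal star by blast
  then show ?thesis using BPI unfolding PI_def B_def Xg_def powQ_def Q_def by simp
qed

end

theorem proposition13:
  fixes S T :: "'a monoid" and p n i :: nat
  assumes "brace S T"
    and "finite (carrier S)"
    and "card (carrier S) = p ^ n"
    and "Factorial_Ring.prime p"
    and "p > n + 1"
  shows "brace_ideal S T {a [^]\<^bsub>S\<^esub> (p ^ i) | a. a \<in> carrier S}
    \<and> generate T {a [^]\<^bsub>T\<^esub> (p ^ i) | a. a \<in> carrier S}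
        = {a [^]\<^bsub>S\<^esub> (p ^ i) | a. a \<in> carrier S}"
proof -
  interpret brc S T using assms(1) unfolding brace_def brc_def brc_axioms_def by auto
  have e1: "{a [^]\<^bsub>S\<^esub> (p ^ i) | a. a \<in> carrier S} = (\<lambda>x. x [^]\<^bsub>S\<^esub> (p ^ i)) ` carrier S" by blast
  have e2: "{a [^]\<^bsub>T\<^esub> (p ^ i) | a. a \<in> carrier S} = (\<lambda>x. x [^]\<^bsub>T\<^esub> (p ^ i)) ` carrier S" by blast
  show ?thesis unfolding e1 e2 using final[OF assms(2) assms(4) assms(3) assms(5)] by simp
qed

end
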